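(* Let $\gamma$ be a cocycle and set $V_{\mathbb{R}}^\gamma:=\{z\in V_{\mathbb{R}}:\lambda(z)\ge\mathrm{val}_L(\gamma^{dom}(\lambda))\text{ for all }\lambda\in\Lambda\}$ and, for $w\in W$, $z_w:=-val(\gamma(w^{-1},\cdot))\in V_{\mathbb{R}}$. Then $V_{\mathbb{R}}^\gamma$ is the convex hull in $V_{\mathbb{R}}$ of the finitely many points $-z_w$, $w\in W$.
   Context: $L$ is a finite extension of $\mathbb{Q}_p$, $K$ a complete extension field of $\mathbb{Q}_p$ containing $L$; $|\ |_L$ normalized absolute value of $L$, $\mathrm{val}_L:K^\times\to\mathbb{R}$ with $\mathrm{val}_L(L^\times)=\mathbb{Z}$. $G$ is the $L$-points of an $L$-split connected reductive group, $T$ a maximal $L$-split torus, $P$ a Borel subgroup containing $T$, $W=N(T)/T$, $U_0$ a maximal compact subgroup special with respect to $T$, $\Lambda=T/(U_0\cap T)$, $\lambda:T\to\Lambda$ the projection, $W$ acting on $\Lambda$ by conjugation. $T^{--}=\{t:|\alpha(t)|_L\ge1$ for all roots $\alpha$ positive for $P\}$, $\Lambda^{--}=\lambda(T^{--})$. $V_{\mathbb{R}}=\mathrm{Hom}(\Lambda,\mathbb{R})$; each $\lambda\in\Lambda$ is viewed as a linear form on $V_{\mathbb{R}}$; $val:\mathrm{Hom}(\Lambda,K^\times)\to V_{\mathbb{R}}$, $\zeta\mapsto\mathrm{val}_L\circ\zeta$. A cocycle is $\gamma:W\times\Lambda\to K^\times$ with (a) $\gamma(w,\lambda\mu)=\gamma(w,\lambda)\gamma(w,\mu)$;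 (b) $\gamma(vw,\lambda)=\gamma(v,{}^w\lambda)\gamma(w,\lambda)$; (c) $|\gamma(w,\lambda)|\le1$ for $\lambda\in\Lambda^{--}$; (d) $\gamma(w,\lambda)=1$ if ${}^w\lambda=\lambda$. $\gamma^{dom}(\lambda):=\gamma(w,\lambda)$ for any $w$ with ${}^w\lambda\in\Lambda^{--}$. *)

theory Defs
  imports "HOL-Analysis.Analysis"
begin

text \<open>Cocharacter lattice Lambda = int^'n (T split of rank CARD('n)); the character
lattice X^*(T) is also modelled by int^'n, with the perfect pairing below.\<close>

definition pair :: "int^'n \<Rightarrow> int^'n \<Rightarrow> int" where
  "pair x l = (\<Sum>i\<in>UNIV. x$i * l$i)"

definition refl_X :: "int^'n \<Rightarrow> int^'n \<Rightarrow> int^'n \<Rightarrow> int^'n" where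
  "refl_X a acor x = (\<chi> i. x$i - pair x acor * a$i)"

definition refl_L :: "int^'n \<Rightarrow> int^'n \<Rightarrow> int^'n \<Rightarrow> int^'n" where
  "refl_L a acor l = (\<chi> i. l$i - pair a l * acor$i)"

definition root_datum :: "(int^'n) set \<Rightarrow> (int^'n \<Rightarrow> int^'n) \<Rightarrow> bool" where
  "root_datum R cor \<longleftrightarrow> finite R \<and> inj_on cor R \<and>
     (\<forall>a\<in>R. pair a (cor a) = 2
        \<and> refl_X a (cor a) ` R = R
        \<and> refl_L a (cor a) ` (cor ` R) = cor ` R
        \<and> (\<forall>c::int. c *s a \<in> R \<longrightarrow> c = 1 \<or> c = -1))"

inductive_set weyl :: "(int^'n) set \<Rightarrow> (int^'n \<Rightarrow> int^'n) \<Rightarrow> (int^'n \<Rightarrow> int^'n) set"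
  for R cor where
  weyl_id: "id \<in> weyl R cor"
| weyl_step: "w \<in> weyl R cor \<Longrightarrow> a \<in> R \<Longrightarrow> refl_L a (cor a) \<circ> w \<in> weyl R cor"

text \<open>Positive roots of the Borel P: those positive on a regular cocharacter rho;
Lambda^{--} = {l. <alpha,l> <= 0 for all positive alpha}.\<close>
definition antidom :: "(int^'n) set \<Rightarrow> int^'n \<Rightarrow> (int^'n) set" where
  "antidom R rho = {l. \<forall>a\<in>R. pair a rho > 0 \<longrightarrow> pair a l \<le> 0}"

definition valuation :: "('k::field \<Rightarrow> real) \<Rightarrow> bool" where
  "valuation v \<longleftrightarrow> (\<forall>x y. x \<noteq> 0 \<longrightarrow> y \<noteq> 0 \<longrightarrow> v (x*y) = v x + v y) \<and>
     (\<forall>x y. x \<noteq> 0 \<longrightarrow> y \<noteq> 0 \<longrightarrow> x + y \<noteq> 0 \<longrightarrow> v (x+y) \<ge> min (v x) (v y))"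

definition absv :: "real \<Rightarrow> ('k::field \<Rightarrow> real) \<Rightarrow> 'k \<Rightarrow> real" where
  "absv q v x = (if x = 0 then 0 else q powr (- v x))"

definition cocycle :: "(int^'n \<Rightarrow> int^'n) set \<Rightarrow> (int^'n) set \<Rightarrow> real \<Rightarrow> ('k::field \<Rightarrow> real)
     \<Rightarrow> ((int^'n \<Rightarrow> int^'n) \<Rightarrow> int^'n \<Rightarrow> 'k) \<Rightarrow> bool" where
  "cocycle W Lm q v g \<longleftrightarrow>
     (\<forall>w\<in>W. \<forall>l. g w l \<noteq> 0) \<and>
     (\<forall>w\<in>W. \<forall>l m. g w (l + m) = g w l * g w m) \<and>
     (\<forall>u\<in>W. \<forall>w\<in>W. \<forall>l. g (u \<circ> w) l = g u (w l) * g w l) \<and>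
     (\<forall>w\<in>W. \<forall>l\<in>Lm. absv q v (g w l) \<le> 1) \<and>
     (\<forall>w\<in>W. \<forall>l. w l = l \<longrightarrow> g w l = 1)"

definition gamma_dom :: "(int^'n \<Rightarrow> int^'n) set \<Rightarrow> (int^'n) set
     \<Rightarrow> ((int^'n \<Rightarrow> int^'n) \<Rightarrow> int^'n \<Rightarrow> 'k) \<Rightarrow> int^'n \<Rightarrow> 'k" where
  "gamma_dom W Lm g l = g (SOME w. w \<in> W \<and> w l \<in> Lm) l"

text \<open>V_R = Hom(Lambda, R) identified with real^'n via z \<mapsto> (z(e_i))_i;
a lattice element l acts as the linear form ev l.\<close>
definition ev :: "int^'n \<Rightarrow> real^'n \<Rightarrow> real" where
  "ev l z = (\<Sum>i\<in>UNIV. real_of_int (l$i) * z$i)"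

definition valvec :: "('k \<Rightarrow> real) \<Rightarrow> (int^'n \<Rightarrow> 'k) \<Rightarrow> real^'n" where
  "valvec v zeta = (\<chi> i. v (zeta (axis i 1)))"

definition V_gamma :: "(int^'n \<Rightarrow> int^'n) set \<Rightarrow> (int^'n) set \<Rightarrow> ('k \<Rightarrow> real)
     \<Rightarrow> ((int^'n \<Rightarrow> int^'n) \<Rightarrow> int^'n \<Rightarrow> 'k) \<Rightarrow> (real^'n) set" where
  "V_gamma W Lm v g = {z. \<forall>l. ev l z \<ge> v (gamma_dom W Lm g l)}"

definition z_pt :: "('k \<Rightarrow> real) \<Rightarrow> ((int^'n \<Rightarrow> int^'n) \<Rightarrow> int^'n \<Rightarrow> 'k)
     \<Rightarrow> (int^'n \<Rightarrow> int^'n) \<Rightarrow> real^'n" where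
  "z_pt v g w = - valvec v (g (inv w))"

end

theory Submission
  imports Defs
begin


lemma pair_sym: "pair x y = pair y x"
  unfolding pair_def by (simp add: mult.commute)
lemma pair_add_right: "pair a (x + y) = pair a x + pair a y"
  unfolding pair_def by (simp add: algebra_simps sum.distrib)
lemma pair_diff_right: "pair a (x - y) = pair a x - pair a y"
  unfolding pair_def by (simp add: algebra_simps sum_subtractf)
lemma pair_smult_right: "pair a (k *s x) = k * pair a x"
  unfolding pair_def by (simp add: algebra_simps sum_distrib_left)
lemma pair_add_left: "pair (x + y) a = pair x a + pair y a"
  unfolding pair_def by (simp add: algebra_simps sum.distrib)
lemma pair_diff_left: "pair (x - y) a = pair x a - pair y a"
  unfolding pair_def by (simp add: algebra_simps sum_subtractf)
lemma pair_smult_left: "pair (k *s x) a = k * pair x a"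
  unfolding pair_def by (simp add: algebra_simps sum_distrib_left)
lemma pair_sum_right: "pair a (sum f A) = (\<Sum>x\<in>A. pair a (f x))"
  unfolding pair_def by (simp add: sum_distrib_left sum.swap[of _ UNIV])
lemma pair_sum_left: "pair (sum f A) a = (\<Sum>x\<in>A. pair (f x) a)"
  unfolding pair_def by (simp add: sum_distrib_right sum.swap[of _ UNIV])

lemma refl_L_eq: "refl_L a c l = l - pair a l *s c"
  unfolding refl_L_def by (simp add: vec_eq_iff)
lemma refl_X_eq: "refl_X a c x = x - pair x c *s a"
  unfolding refl_X_def by (simp add: vec_eq_iff)

lemma pair_refl_L: "pair a (refl_L b c x) = pair (refl_X b c a) x"
  unfolding refl_L_eq refl_X_eq pair_diff_right pair_diff_left pair_smult_left pair_smult_right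
  by (simp add: pair_sym)

lemma refl_L_invol: "pair a c = 2 \<Longrightarrow> refl_L a c (refl_L a c l) = l"
  unfolding refl_L_eq by (simp add: pair_diff_right pair_smult_right vec_eq_iff algebra_simps)

lemma refl_L_sum: "refl_L a c (\<Sum>j\<in>A. k j *s v j) = (\<Sum>j\<in>A. k j *s refl_L a c (v j))"
  unfolding refl_L_eq pair_sum_right pair_smult_right
  by (simp add: vec_eq_iff sum_subtractf algebra_simps sum_distrib_left sum_distrib_right)

lemma weyl_comp: "u \<in> weyl R cor \<Longrightarrow> v \<in> weyl R cor \<Longrightarrow> u \<circ> v \<in> weyl R cor"
proof (induction u rule: weyl.induct)
  case weyl_id then show ?case by simp
next
  case (weyl_step w a)
  then have "refl_L a (cor a) \<circ> (w \<circ> v) \<in> weyl R cor" by (intro weyl.weyl_step)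
  then show ?case by (simp add: comp_def)
qed

lemma weyl_refl: "a \<in> R \<Longrightarrow> refl_L a (cor a) \<in> weyl R cor"
  using weyl_step[OF weyl_id] by simp

lemma weyl_inv:
  assumes rd: "root_datum R cor" and w: "w \<in> weyl R cor"
  shows "\<exists>w'\<in>weyl R cor. w' \<circ> w = id \<and> w \<circ> w' = id"
  using w
proof (induction w rule: weyl.induct)
  case weyl_id then show ?case by (intro bexI[of _ id] conjI weyl.weyl_id) simp_all
next
  case (weyl_step w a)
  then obtain w' where w': "w' \<in> weyl R cor" "w' \<circ> w = id" "w \<circ> w' = id" by blast
  have inv: "refl_L a (cor a) (refl_L a (cor a) l) = l" for l
    using rd weyl_step(2) by (intro refl_L_invol) (auto simp: root_datum_def)
  show ?case
  proof (intro bexI conjI)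
    show "w' \<circ> refl_L a (cor a) \<in> weyl R cor" using weyl_comp[OF w'(1) weyl_refl[OF weyl_step(2)]] .
    show "w' \<circ> refl_L a (cor a) \<circ> (refl_L a (cor a) \<circ> w) = id"
      using w'(2) inv by (simp add: fun_eq_iff comp_def)
    show "refl_L a (cor a) \<circ> w \<circ> (w' \<circ> refl_L a (cor a)) = id"
      using w'(3) inv by (simp add: fun_eq_iff comp_def)
  qed
qed

lemma weyl_lin: "w \<in> weyl R cor \<Longrightarrow> w x = (\<Sum>j\<in>UNIV. x$j *s w (axis j 1))"
proof (induction w rule: weyl.induct)
  case weyl_id then show ?case by (simp add: basis_expansion)
next
  case (weyl_step w a)
  then show ?case by (simp add: refl_L_sum)
qed

definition Cset :: "(int^'n) set \<Rightarrow> (int^'n) set" where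
  "Cset CR = {y. \<exists>k. y = (\<Sum>c\<in>CR. k c *s c)}"

lemma Cset_diff: "y \<in> Cset CR \<Longrightarrow> y' \<in> Cset CR \<Longrightarrow> y - y' \<in> Cset CR"
proof -
  assume "y \<in> Cset CR" "y' \<in> Cset CR"
  then obtain k k' where "y = (\<Sum>c\<in>CR. k c *s c)" "y' = (\<Sum>c\<in>CR. k' c *s c)" by (auto simp: Cset_def)
  then have "y - y' = (\<Sum>c\<in>CR. (k c - k' c) *s c)"
    by (simp add: vec_eq_iff sum_subtractf algebra_simps)
  then show ?thesis unfolding Cset_def mem_Collect_eq by (intro exI[of _ "\<lambda>c. k c - k' c"])
qed

lemma Cset_single: "finite CR \<Longrightarrow> c \<in> CR \<Longrightarrow> t *s c \<in> Cset CR"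
proof -
  assume "finite CR" "c \<in> CR"
  have "(\<Sum>c'\<in>CR. (if c' = c then t else 0) *s c') = (\<Sum>c'\<in>CR. if c' = c then t *s c' else 0)"
    by (rule sum.cong) auto
  also have "\<dots> = t *s c" using \<open>finite CR\<close> \<open>c \<in> CR\<close> by (simp add: sum.delta')
  finally show ?thesis unfolding Cset_def mem_Collect_eq by (intro exI[of _ "\<lambda>c'. if c' = c then t else 0"]) simp
qed

lemma Cset_zero: "0 \<in> Cset CR"
  unfolding Cset_def mem_Collect_eq by (rule exI[of _ "\<lambda>_. 0"]) (simp add: vec_eq_iff)

lemma weyl_diff_C:
  assumes "finite R" "w \<in> weyl R cor"
  shows "w x - x \<in> Cset (cor ` R)"
  using assms(2)
proof (induction w rule: weyl.induct)
  case weyl_id then show ?case by (simp add: Cset_zero)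
next
  case (weyl_step w a)
  have "(refl_L a (cor a) \<circ> w) x - x = (w x - x) - pair a (w x) *s cor a"
    by (simp add: refl_L_eq)
  also have "\<dots> \<in> Cset (cor ` R)"
    using weyl_step assms(1) by (intro Cset_diff[OF weyl_step.IH] Cset_single) auto
  finally show ?case .
qed

lemma weyl_pair_perm:
  assumes rd: "root_datum R cor" and w: "w \<in> weyl R cor"
  shows "a \<in> R \<Longrightarrow> \<exists>a'\<in>R. \<forall>x. pair a (w x) = pair a' x"
  using w
proof (induction w arbitrary: a rule: weyl.induct)
  case weyl_id then show ?case by auto
next
  case (weyl_step w b)
  have "refl_X b (cor b) ` R = R" using rd weyl_step(2) unfolding root_datum_def by blast
  then have "refl_X b (cor b) a \<in> R" using weyl_step(4) by blast
  then obtain a' where "a' \<in> R" "\<forall>x. pair (refl_X b (cor b) a) (w x) = pair a' x"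
    using weyl_step by blast
  then show ?case by (intro bexI[of _ a']) (simp_all add: pair_refl_L)
qed


lemma rd_facts:
  assumes "root_datum R cor" "a \<in> R"
  shows "pair a (cor a) = 2" "refl_X a (cor a) ` R = R" "refl_L a (cor a) ` (cor ` R) = cor ` R"
    "finite R" "inj_on cor R"
  using assms unfolding root_datum_def by blast+

lemma rd_finite: "root_datum R cor \<Longrightarrow> finite R"
  unfolding root_datum_def by blast

lemma T_ident:
  assumes rd: "root_datum R cor" and a: "a \<in> R"
  shows "2 *s (\<Sum>c\<in>cor ` R. pair a c *s c) = (\<Sum>c\<in>cor ` R. (pair a c)^2) *s cor a"
proof -
  let ?s = "refl_L a (cor a)"
  let ?CR = "cor ` R"
  note f = rd_facts[OF rd a]
  have inv: "?s (?s l) = l" for l using f(1) by (rule refl_L_invol)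
  have inj: "inj_on ?s ?CR" by (metis inv inj_onI)
  have ps: "pair a (?s c) = - pair a c" for c
    unfolding refl_L_eq pair_diff_right pair_smult_right f(1) by simp
  show ?thesis
  proof (subst vec_eq_iff, intro allI)
    fix i
    have "(\<Sum>c\<in>?CR. pair a c * c$i) = (\<Sum>c\<in>?s ` ?CR. pair a c * c$i)" using f(3) by simp
    also have "\<dots> = (\<Sum>c\<in>?CR. pair a (?s c) * (?s c)$i)" by (subst sum.reindex[OF inj]) simp
    also have "\<dots> = (\<Sum>c\<in>?CR. (pair a c)^2 * cor a $ i - pair a c * c$i)"
    proof (rule sum.cong)
      fix c
      have comp: "(?s c)$i = c$i - pair a c * cor a $ i" by (simp add: refl_L_eq)
      show "pair a (?s c) * (?s c)$i = (pair a c)^2 * cor a $ i - pair a c * c$i"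
        unfolding comp ps by (simp add: algebra_simps power2_eq_square)
    qed simp
    also have "\<dots> = (\<Sum>c\<in>?CR. (pair a c)^2) * cor a $ i - (\<Sum>c\<in>?CR. pair a c * c$i)"
      by (simp add: sum_subtractf sum_distrib_right)
    finally show "(2 *s (\<Sum>c\<in>?CR. pair a c *s c)) $ i = ((\<Sum>c\<in>?CR. (pair a c)^2) *s cor a) $ i"
      by simp
  qed
qed



lemma C_N_zero:
  assumes rd: "root_datum R cor" and y: "y \<in> Cset (cor ` R)" and N: "\<forall>a\<in>R. pair a y = 0"
  shows "y = 0"
proof -
  let ?CR = "cor ` R"
  have finR: "finite R" using rd by (rule rd_finite)
  have finC: "finite ?CR" using finR by simp
  obtain k where yk: "y = (\<Sum>c\<in>?CR. k c *s c)" using y unfolding Cset_def by blast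
  define r where "r c = inv_into R cor c" for c
  have r: "r c \<in> R" "cor (r c) = c" if "c \<in> ?CR" for c
    using that unfolding r_def by (auto intro: inv_into_into f_inv_into_f)
  define E where "E c = (\<Sum>c'\<in>?CR. (pair (r c) c')^2)" for c
  have Epos: "E c > 0" if c: "c \<in> ?CR" for c
  proof -
    have "pair (r c) c = 2" using rd_facts(1)[OF rd r(1)[OF c]] r(2)[OF c] by simp
    then have "(pair (r c) c)^2 \<le> E c" unfolding E_def
      by (intro member_le_sum[OF c]) (simp_all add: finC)
    with \<open>pair (r c) c = 2\<close> show ?thesis by simp
  qed
  define M where "M = (\<Prod>c\<in>?CR. E c)"
  define P where "P c = (\<Prod>c'\<in>?CR - {c}. E c')" for c
  have MP: "M = E c * P c" if "c \<in> ?CR" for c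
    unfolding M_def P_def using that finC by (simp add: prod.remove)
  have Mpos: "M > 0" unfolding M_def using Epos by (intro prod_pos) auto
  define \<eta> where "\<eta> = (\<Sum>c\<in>?CR. (k c * P c) *s r c)"
  have Ti: "E c *s c = 2 *s (\<Sum>c'\<in>?CR. pair (r c) c' *s c')" if c: "c \<in> ?CR" for c
    using T_ident[OF rd r(1)[OF c]] r(2)[OF c] unfolding E_def by simp
  have claim1: "M *s y = 2 *s (\<Sum>c'\<in>?CR. pair \<eta> c' *s c')"
  proof -
    have "M *s y = (\<Sum>c\<in>?CR. (M * k c) *s c)"
      unfolding yk by (simp add: vec_eq_iff sum_distrib_left mult.assoc)
    also have "\<dots> = (\<Sum>c\<in>?CR. (k c * P c) *s (E c *s c))"
    proof (rule sum.cong)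
      fix c assume c: "c \<in> ?CR"
      show "(M * k c) *s c = (k c * P c) *s (E c *s c)"
        unfolding MP[OF c] by (simp add: vector_smult_assoc mult_ac)
    qed simp
    also have "\<dots> = (\<Sum>c\<in>?CR. (k c * P c) *s (2 *s (\<Sum>c'\<in>?CR. pair (r c) c' *s c')))"
    proof (rule sum.cong)
      fix c assume c: "c \<in> ?CR"
      show "(k c * P c) *s (E c *s c) = (k c * P c) *s (2 *s (\<Sum>c'\<in>?CR. pair (r c) c' *s c'))"
        by (simp only: Ti[OF c])
    qed simp
    also have "\<dots> = 2 *s (\<Sum>c'\<in>?CR. pair \<eta> c' *s c')"
      unfolding \<eta>_def pair_sum_left pair_smult_left vec_eq_iff
    proof
      fix i
      have "(\<Sum>c\<in>?CR. (k c * P c) *s (2 *s (\<Sum>c'\<in>?CR. pair (r c) c' *s c'))) $ i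
          = 2 * (\<Sum>c\<in>?CR. \<Sum>c'\<in>?CR. k c * P c * pair (r c) c' * c' $ i)"
        by (simp add: sum_distrib_left mult_ac)
      also have "\<dots> = 2 * (\<Sum>c'\<in>?CR. \<Sum>c\<in>?CR. k c * P c * pair (r c) c' * c' $ i)"
        by (subst sum.swap) (rule refl)
      also have "\<dots> = (2 *s (\<Sum>c'\<in>?CR. (\<Sum>c\<in>?CR. k c * P c * pair (r c) c') *s c')) $ i"
        by (simp add: sum_distrib_left sum_distrib_right mult_ac)
      finally show "(\<Sum>c\<in>?CR. (k c * P c) *s (2 *s (\<Sum>c'\<in>?CR. pair (r c) c' *s c'))) $ i
          = (2 *s (\<Sum>c'\<in>?CR. (\<Sum>c\<in>?CR. k c * P c * pair (r c) c') *s c')) $ i" .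
    qed
    finally show ?thesis .
  qed
  have "pair \<eta> y = 0"
    unfolding \<eta>_def pair_sum_left pair_smult_left using r(1) N by simp
  then have "0 = pair \<eta> (M *s y)" by (simp add: pair_smult_right)
  also have "\<dots> = 2 * (\<Sum>c'\<in>?CR. (pair \<eta> c')^2)"
    unfolding claim1 pair_smult_right pair_sum_right by (simp add: power2_eq_square)
  finally have "(\<Sum>c'\<in>?CR. (pair \<eta> c')^2) = 0" by simp
  then have "\<forall>c'\<in>?CR. (pair \<eta> c')^2 = 0" using finC by (subst (asm) sum_nonneg_eq_0_iff) auto
  then have "\<forall>c'\<in>?CR. pair \<eta> c' = 0" by simp
  then have "(\<Sum>c'\<in>?CR. pair \<eta> c' *s c') = 0" by (intro sum.neutral) simp
  then have "M *s y = 0" unfolding claim1 by simp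
  with Mpos show "y = 0" by (simp add: vec_eq_iff)
qed

lemma Cset_diff': "y - x \<in> Cset CR \<Longrightarrow> y' - x \<in> Cset CR \<Longrightarrow> y - y' \<in> Cset CR"
  using Cset_diff[of "y - x" CR "y' - x"] by simp

lemma orbit_finite:
  assumes rd: "root_datum R cor"
  shows "finite {w x | w. w \<in> weyl R cor}"
proof -
  have finR: "finite R" using rd by (rule rd_finite)
  define A where "A = {y. y - x \<in> Cset (cor ` R) \<and> (\<forall>a\<in>R. pair a y \<in> (\<lambda>a'. pair a' x) ` R)}"
  define F where "F y = restrict (\<lambda>a. pair a y) R" for y
  have sub: "{w x | w. w \<in> weyl R cor} \<subseteq> A"
  proof safe
    fix w assume w: "w \<in> weyl R cor"
    show "w x \<in> A" unfolding A_def
    proof (intro CollectI conjI ballI)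
      show "w x - x \<in> Cset (cor ` R)" by (rule weyl_diff_C[OF finR w])
      fix a assume "a \<in> R"
      then obtain a' where "a' \<in> R" "\<forall>x. pair a (w x) = pair a' x" using weyl_pair_perm[OF rd w] by blast
      then show "pair a (w x) \<in> (\<lambda>a'. pair a' x) ` R" by auto
    qed
  qed
  have "F ` A \<subseteq> PiE R (\<lambda>_. (\<lambda>a'. pair a' x) ` R)" unfolding F_def A_def by auto
  then have fin: "finite (F ` A)" by (rule finite_subset) (intro finite_PiE finR finite_imageI)
  have "inj_on F A"
  proof (rule inj_onI)
    fix y y' assume "y \<in> A" "y' \<in> A" "F y = F y'"
    then have "y - y' \<in> Cset (cor ` R)" "\<forall>a\<in>R. pair a (y - y') = 0"
      unfolding A_def F_def by (auto intro: Cset_diff' simp: pair_diff_right restrict_def fun_eq_iff split: if_splits)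
    then have "y - y' = 0" by (rule C_N_zero[OF rd])
    then show "y = y'" by simp
  qed
  with fin have "finite A" by (rule finite_imageD)
  then show ?thesis using sub by (rule finite_subset[rotated])
qed

lemma weyl_finite:
  fixes R :: "(int^'n) set"
  assumes rd: "root_datum R cor"
  shows "finite (weyl R cor)"
proof -
  define Orb where "Orb j = {w (axis j 1) | w. w \<in> weyl R cor}" for j :: 'n
  define G where "G f = (\<lambda>x::int^'n. \<Sum>j\<in>UNIV. x$j *s f j)" for f :: "'n \<Rightarrow> int^'n"
  have "weyl R cor \<subseteq> G ` PiE UNIV Orb"
  proof
    fix w assume w: "w \<in> weyl R cor"
    have "w = G (\<lambda>j. w (axis j 1))" unfolding G_def by (rule ext) (rule weyl_lin[OF w])
    moreover have "(\<lambda>j. w (axis j 1)) \<in> PiE UNIV Orb" unfolding Orb_def using w by auto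
    ultimately show "w \<in> G ` PiE UNIV Orb" by blast
  qed
  moreover have "finite (PiE UNIV Orb)"
    unfolding Orb_def by (intro finite_PiE finite orbit_finite[OF rd])
  ultimately show ?thesis by (meson finite_imageI finite_subset)
qed



lemma refl_X_invol: "pair a c = 2 \<Longrightarrow> refl_X a c (refl_X a c x) = x"
  unfolding refl_X_eq by (simp add: pair_diff_left pair_smult_left vec_eq_iff algebra_simps)

definition psi :: "(int^'n) set \<Rightarrow> int^'n \<Rightarrow> int^'n \<Rightarrow> int" where
  "psi R rho x = (\<Sum>b\<in>R. pair b rho * pair b x)"

lemma psi_lin: "psi R rho (y - k *s c) = psi R rho y - k * psi R rho c"
  unfolding psi_def pair_diff_right pair_smult_right
  by (simp add: sum_subtractf sum_distrib_left algebra_simps)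

lemma psi_ident:
  assumes rd: "root_datum R cor" and a: "a \<in> R"
  shows "2 * psi R rho (cor a) = (\<Sum>b\<in>R. (pair b (cor a))^2) * pair a rho"
proof -
  let ?t = "refl_X a (cor a)"
  let ?c = "cor a"
  note f = rd_facts[OF rd a]
  have inj: "inj_on ?t R" by (metis refl_X_invol[OF f(1)] inj_onI)
  have p1: "pair (?t b) ?c = - pair b ?c" for b
    unfolding refl_X_eq pair_diff_left pair_smult_left f(1) by simp
  have p2: "pair (?t b) rho = pair b rho - pair b ?c * pair a rho" for b
    unfolding refl_X_eq pair_diff_left pair_smult_left by simp
  have "psi R rho ?c = (\<Sum>b\<in>?t ` R. pair b rho * pair b ?c)" unfolding psi_def using f(2) by simp
  also have "\<dots> = (\<Sum>b\<in>R. pair (?t b) rho * pair (?t b) ?c)" by (subst sum.reindex[OF inj]) simp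
  also have "\<dots> = (\<Sum>b\<in>R. (pair b ?c)^2 * pair a rho - pair b rho * pair b ?c)"
    unfolding p1 p2 by (simp add: algebra_simps power2_eq_square)
  also have "\<dots> = (\<Sum>b\<in>R. (pair b ?c)^2) * pair a rho - psi R rho ?c"
    unfolding psi_def by (simp add: sum_subtractf sum_distrib_right)
  finally show ?thesis by simp
qed

lemma psi_coroot_pos:
  assumes rd: "root_datum R cor" and a: "a \<in> R" and pos: "pair a rho > 0"
  shows "psi R rho (cor a) > 0"
proof -
  have "(pair a (cor a))^2 \<le> (\<Sum>b\<in>R. (pair b (cor a))^2)"
    using rd_finite[OF rd] a by (intro member_le_sum) auto
  then have "(\<Sum>b\<in>R. (pair b (cor a))^2) > 0" using rd_facts(1)[OF rd a] by simp
  with pos have "2 * psi R rho (cor a) > 0" unfolding psi_ident[OF rd a] by simp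
  then show ?thesis by simp
qed

lemma antidom_exists:
  assumes rd: "root_datum R cor"
  shows "\<exists>w\<in>weyl R cor. w l \<in> antidom R rho"
proof -
  let ?W = "weyl R cor"
  have fin: "finite ((\<lambda>w. psi R rho (w l)) ` ?W)" using weyl_finite[OF rd] by simp
  have ne: "(\<lambda>w. psi R rho (w l)) ` ?W \<noteq> {}" using weyl_id by blast
  obtain w0 where w0: "w0 \<in> ?W" "psi R rho (w0 l) = Min ((\<lambda>w. psi R rho (w l)) ` ?W)"
    using Min_in[OF fin ne] by auto
  have "w0 l \<in> antidom R rho" unfolding antidom_def
  proof (intro CollectI ballI impI)
    fix a assume a: "a \<in> R" and pos: "0 < pair a rho"
    show "pair a (w0 l) \<le> 0"
    proof (rule ccontr)
      assume "\<not> pair a (w0 l) \<le> 0"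
      then have gt: "pair a (w0 l) > 0" by simp
      have w1: "refl_L a (cor a) \<circ> w0 \<in> ?W" using w0(1) a by (rule weyl_step)
      have "psi R rho ((refl_L a (cor a) \<circ> w0) l) = psi R rho (w0 l) - pair a (w0 l) * psi R rho (cor a)"
        by (simp add: refl_L_eq psi_lin)
      also have "\<dots> < psi R rho (w0 l)" using gt psi_coroot_pos[OF rd a pos] by simp
      finally have "psi R rho ((refl_L a (cor a) \<circ> w0) l) < Min ((\<lambda>w. psi R rho (w l)) ` ?W)"
        using w0(2) by simp
      moreover have "Min ((\<lambda>w. psi R rho (w l)) ` ?W) \<le> psi R rho ((refl_L a (cor a) \<circ> w0) l)"
        using Min_le[OF fin imageI[OF w1, of "\<lambda>w. psi R rho (w l)"]] by simp
      ultimately show False by simp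
    qed
  qed
  with w0(1) show ?thesis by blast
qed

lemma val_mult: "valuation v \<Longrightarrow> x \<noteq> 0 \<Longrightarrow> y \<noteq> 0 \<Longrightarrow> v (x * y) = v x + v y"
  unfolding valuation_def by blast

lemma val_one: "valuation v \<Longrightarrow> v 1 = 0"
  using val_mult[of v 1 1] by simp

lemma additive_lin:
  fixes \<phi> :: "int^'n \<Rightarrow> real"
  assumes add: "\<And>x y. \<phi> (x + y) = \<phi> x + \<phi> y"
  shows "\<phi> l = (\<Sum>i\<in>UNIV. real_of_int (l$i) * \<phi> (axis i 1))"
proof -
  have z: "\<phi> 0 = 0" using add[of 0 0] by simp
  have neg: "\<phi> (- x) = - \<phi> x" for x using add[of x "-x"] z by simp
  have natm: "\<phi> (of_nat n *s x) = real n * \<phi> x" for n x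
  proof (induction n)
    case 0 then show ?case using z by simp
  next
    case (Suc n)
    have "of_nat (Suc n) *s x = of_nat n *s x + x" by (simp add: vec_eq_iff algebra_simps)
    then show ?case using Suc add by (simp add: algebra_simps)
  qed
  have intm: "\<phi> (k *s x) = real_of_int k * \<phi> x" for k x
  proof (cases "k \<ge> 0")
    case True
    then have "k = of_nat (nat k)" by simp
    then show ?thesis using natm[of "nat k" x] by (metis of_int_of_nat_eq)
  next
    case False
    then have k: "k = - of_nat (nat (-k))" by simp
    have "k *s x = - (of_nat (nat (-k)) *s x)" by (subst k) (simp add: vec_eq_iff)
    then have "\<phi> (k *s x) = \<phi> (- (of_nat (nat (-k)) *s x))" by simp
    also have "\<dots> = - (real (nat (-k)) * \<phi> x)" by (simp only: neg natm)
    finally have "\<phi> (k *s x) = - (real (nat (-k)) * \<phi> x)" .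
    also have "\<dots> = real_of_int k * \<phi> x" using False by simp
    finally show ?thesis .
  qed
  have sumr: "\<phi> (sum f A) = (\<Sum>i\<in>A. \<phi> (f i))" if "finite A" for f :: "'n \<Rightarrow> int^'n" and A
    using that by (induction A rule: finite_induct) (simp_all add: z add)
  have "\<phi> l = \<phi> (\<Sum>i\<in>UNIV. l$i *s axis i 1)" by (simp add: basis_expansion)
  also have "\<dots> = (\<Sum>i\<in>UNIV. real_of_int (l$i) * \<phi> (axis i 1))" by (simp add: sumr intm)
  finally show ?thesis .
qed

lemma ev_valvec:
  assumes val: "valuation v" and nz: "\<And>l. h l \<noteq> 0" and hom: "\<And>l m. h (l + m) = h l * h m"
  shows "ev l (valvec v h) = v (h l)"
proof -
  have "v (h l) = (\<Sum>i\<in>UNIV. real_of_int (l$i) * v (h (axis i 1)))"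
    by (rule additive_lin) (simp add: hom val_mult[OF val] nz)
  then show ?thesis unfolding ev_def valvec_def by simp
qed

lemma ev_affine: fixes a b :: real shows "ev l (a *\<^sub>R x + b *\<^sub>R y) = a * ev l x + b * ev l y"
  unfolding ev_def by (simp add: sum.distrib sum_distrib_left algebra_simps)


lemma V_convex: "convex (V_gamma W Lm v g)"
proof (rule convexI)
  fix x y and u w :: real
  assume x: "x \<in> V_gamma W Lm v g" and y: "y \<in> V_gamma W Lm v g"
    and u: "0 \<le> u" and w: "0 \<le> w" and uw: "u + w = 1"
  show "u *\<^sub>R x + w *\<^sub>R y \<in> V_gamma W Lm v g"
    unfolding V_gamma_def mem_Collect_eq ev_affine
  proof
    fix l
    have "u * v (gamma_dom W Lm g l) \<le> u * ev l x" using x u unfolding V_gamma_def by (simp add: mult_left_mono)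
    moreover have "w * v (gamma_dom W Lm g l) \<le> w * ev l y" using y w unfolding V_gamma_def by (simp add: mult_left_mono)
    ultimately have "(u + w) * v (gamma_dom W Lm g l) \<le> u * ev l x + w * ev l y" by (simp add: algebra_simps)
    then show "v (gamma_dom W Lm g l) \<le> u * ev l x + w * ev l y" using uw by simp
  qed
qed

theorem lemma2p3:
  fixes R :: "(int^'n) set" and cor :: "int^'n \<Rightarrow> int^'n" and rho :: "int^'n"
    and q :: real and valL :: "'k::field \<Rightarrow> real"
    and g :: "(int^'n \<Rightarrow> int^'n) \<Rightarrow> int^'n \<Rightarrow> 'k"
  assumes "root_datum R cor"
    and "\<forall>a\<in>R. pair a rho \<noteq> 0"
    and "valuation valL" and "q > 1"
    and "cocycle (weyl R cor) (antidom R rho) q valL g"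
  shows "V_gamma (weyl R cor) (antidom R rho) valL g
         = convex hull {- z_pt valL g w | w. w \<in> weyl R cor}"
proof -
  note rd = assms(1) and val = assms(3) and q = assms(4) and coc = assms(5)
  let ?W = "weyl R cor"
  let ?Lm = "antidom R rho"
  define S where "S = {- z_pt valL g w | w. w \<in> ?W}"
  define V where "V = V_gamma ?W ?Lm valL g"
  have idW: "id \<in> ?W" by (rule weyl_id)
  have compW: "u \<in> ?W \<Longrightarrow> w \<in> ?W \<Longrightarrow> u \<circ> w \<in> ?W" for u w by (rule weyl_comp)
  have finW: "finite ?W" by (rule weyl_finite[OF rd])
  have invW: "inv w \<in> ?W" "inv w \<circ> w = id" "w \<circ> inv w = id" if w: "w \<in> ?W" for w
  proof -
    obtain w' where w': "w' \<in> ?W" "w' \<circ> w = id" "w \<circ> w' = id"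
      using weyl_inv[OF rd w] by blast
    have "inv w = w'" using w' by (intro inv_unique_comp)
    then show "inv w \<in> ?W" "inv w \<circ> w = id" "w \<circ> inv w = id" using w' by simp_all
  qed
  have C: "(\<forall>w\<in>?W. \<forall>l. g w l \<noteq> 0) \<and>
     (\<forall>w\<in>?W. \<forall>l m. g w (l + m) = g w l * g w m) \<and>
     (\<forall>u\<in>?W. \<forall>w\<in>?W. \<forall>l. g (u \<circ> w) l = g u (w l) * g w l) \<and>
     (\<forall>w\<in>?W. \<forall>l\<in>?Lm. absv q valL (g w l) \<le> 1) \<and>
     (\<forall>w\<in>?W. \<forall>l. w l = l \<longrightarrow> g w l = 1)"
    using coc by (simp only: cocycle_def)
  have nz: "g w l \<noteq> 0" if "w \<in> ?W" for w l
    using C[THEN conjunct1] that by simp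
  have hom: "g w (l + m) = g w l * g w m" if "w \<in> ?W" for w l m
    using C[THEN conjunct2, THEN conjunct1] that by simp
  have gcomp: "g (u \<circ> w) l = g u (w l) * g w l" if "u \<in> ?W" "w \<in> ?W" for u w l
    using C[THEN conjunct2, THEN conjunct2, THEN conjunct1] that by simp
  have abs1: "absv q valL (g w l) \<le> 1" if "w \<in> ?W" "l \<in> ?Lm" for w l
    using C[THEN conjunct2, THEN conjunct2, THEN conjunct2, THEN conjunct1] that by simp
  have gid: "g id l = 1" for l using C[THEN conjunct2, THEN conjunct2, THEN conjunct2, THEN conjunct2] idW by simp
  have evp: "ev l (valvec valL (g w)) = valL (g w l)" if "w \<in> ?W" for w l
    using that by (intro ev_valvec[OF val]) (simp_all add: nz hom)
  have K: "valL (g w x) \<le> 0" if w: "w \<in> ?W" and wx: "w x \<in> ?Lm" for w x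
  proof -
    have "1 = g (inv w \<circ> w) x" using invW(2)[OF w] gid by simp
    also have "\<dots> = g (inv w) (w x) * g w x" using gcomp invW(1)[OF w] w by simp
    finally have "0 = valL (g (inv w) (w x)) + valL (g w x)"
      using val_mult[OF val] nz invW(1)[OF w] w val_one[OF val] by metis
    moreover have "valL (g (inv w) (w x)) \<ge> 0"
    proof (rule ccontr)
      assume "\<not> valL (g (inv w) (w x)) \<ge> 0"
      then have "1 < q powr (- valL (g (inv w) (w x)))" using q by simp
      moreover have "absv q valL (g (inv w) (w x)) \<le> 1" using abs1 invW(1)[OF w] wx by blast
      ultimately show False unfolding absv_def using nz invW(1)[OF w] by simp
    qed
    ultimately show ?thesis by simp
  qed
  define U where "U l = (SOME w. w \<in> ?W \<and> w l \<in> ?Lm)" for l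
  have U: "U l \<in> ?W" "U l l \<in> ?Lm" for l
  proof -
    have "\<exists>w. w \<in> ?W \<and> w l \<in> ?Lm" using antidom_exists[OF rd] by blast
    then have "U l \<in> ?W \<and> U l l \<in> ?Lm" unfolding U_def by (rule someI_ex)
    then show "U l \<in> ?W" "U l l \<in> ?Lm" by simp_all
  qed
  have gd: "gamma_dom ?W ?Lm g l = g (U l) l" for l unfolding gamma_dom_def U_def by simp
  have minU: "valL (g (U l) l) \<le> valL (g w l)" if w: "w \<in> ?W" for w l
  proof -
    have uw: "U l \<circ> inv w \<in> ?W" using compW U(1) invW(1)[OF w] by blast
    have "U l = (U l \<circ> inv w) \<circ> w" using invW(2)[OF w] by (simp add: comp_assoc)
    then have "g (U l) l = g (U l \<circ> inv w) (w l) * g w l" using gcomp[OF uw w] by metis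
    then have "valL (g (U l) l) = valL (g (U l \<circ> inv w) (w l)) + valL (g w l)"
      using val_mult[OF val] nz uw w by metis
    moreover have "(U l \<circ> inv w) (w l) \<in> ?Lm"
      using U(2)[of l] fun_cong[OF invW(2)[OF w], of l] by simp
    then have "valL (g (U l \<circ> inv w) (w l)) \<le> 0" by (rule K[OF uw])
    ultimately show ?thesis by simp
  qed
  have S_eq: "S = (\<lambda>u. valvec valL (g u)) ` ?W"
  proof
    show "S \<subseteq> (\<lambda>u. valvec valL (g u)) ` ?W"
      unfolding S_def z_pt_def using invW(1) by auto
    show "(\<lambda>u. valvec valL (g u)) ` ?W \<subseteq> S"
    proof
      fix p assume "p \<in> (\<lambda>u. valvec valL (g u)) ` ?W"
      then obtain u where u: "u \<in> ?W" "p = valvec valL (g u)" by blast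
      have "inv (inv u) = u" using invW[OF u(1)] by (intro inv_unique_comp) simp_all
      then have "p = - z_pt valL g (inv u)" unfolding z_pt_def u(2) by simp
      then show "p \<in> S" unfolding S_def using invW(1)[OF u(1)] by blast
    qed
  qed
  have finS: "finite S" unfolding S_eq using finW by simp
  have SV: "S \<subseteq> V"
  proof
    fix p assume "p \<in> S"
    then obtain u where u: "u \<in> ?W" "p = valvec valL (g u)" unfolding S_eq by blast
    show "p \<in> V" unfolding V_def V_gamma_def
      using minU[OF u(1)] evp[OF u(1)] gd u(2) by simp
  qed
  have HV: "convex hull S \<subseteq> V" unfolding V_def
    by (rule hull_minimal[OF SV[unfolded V_def]]) (rule V_convex)
  have VH: "V \<subseteq> convex hull S"
  proof
    fix z assume zV: "z \<in> V"
    show "z \<in> convex hull S"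
    proof (rule ccontr)
      assume nz: "z \<notin> convex hull S"
      have "closed (convex hull S)" using finS by (intro compact_imp_closed finite_imp_compact_convex_hull)
      then obtain f b where fb: "inner f z < b" "\<forall>x\<in>convex hull S. b < inner f x"
        using separating_hyperplane_closed_point[OF convex_convex_hull _ nz] by blast
      have fS: "b < inner f p" if "p \<in> S" for p using fb(2) hull_subset[of S convex] that by blast
      define \<delta> where "\<delta> = b - inner f z"
      have dpos: "\<delta> > 0" using fb(1) unfolding \<delta>_def by simp
      define K0 where "K0 = (\<Sum>p\<in>S. \<Sum>i\<in>UNIV. \<bar>p$i - z$i\<bar>)"
      obtain N :: nat where N: "K0 < real N * \<delta>" using ex_less_of_nat_mult[OF dpos] by blast
      define l where "l = (\<chi> i. \<lfloor>real N * f$i\<rfloor>)"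
      define p where "p = valvec valL (g (U l))"
      have pS: "p \<in> S" unfolding S_eq p_def using U(1) by blast
      have Kp: "(\<Sum>i\<in>UNIV. \<bar>p$i - z$i\<bar>) \<le> K0"
        unfolding K0_def using finS pS by (intro member_le_sum) auto
      have "ev l z \<ge> valL (gamma_dom ?W ?Lm g l)" using zV unfolding V_def V_gamma_def by simp
      then have zp: "ev l z \<ge> ev l p" unfolding p_def evp[OF U(1)] gd .
      have termwise: "real_of_int (l$i) * (p$i - z$i) \<ge> real N * f$i * (p$i - z$i) - \<bar>p$i - z$i\<bar>" for i
      proof -
        define t where "t = real_of_int (l$i) - real N * f$i"
        have "\<bar>t\<bar> \<le> 1" unfolding t_def l_def by (simp, linarith)
        then have "\<bar>t * (p$i - z$i)\<bar> \<le> \<bar>p$i - z$i\<bar>" by (simp add: abs_mult mult_left_le_one_le)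
        then have "t * (p$i - z$i) \<ge> - \<bar>p$i - z$i\<bar>" by linarith
        then show ?thesis unfolding t_def by (simp add: algebra_simps)
      qed
      have "ev l p - ev l z = (\<Sum>i\<in>UNIV. real_of_int (l$i) * (p$i - z$i))"
        unfolding ev_def by (simp add: sum_subtractf algebra_simps)
      also have "\<dots> \<ge> (\<Sum>i\<in>UNIV. real N * f$i * (p$i - z$i) - \<bar>p$i - z$i\<bar>)"
        by (intro sum_mono termwise)
      also have "(\<Sum>i\<in>UNIV. real N * f$i * (p$i - z$i) - \<bar>p$i - z$i\<bar>)
          = (\<Sum>i\<in>UNIV. real N * f$i * (p$i - z$i)) - (\<Sum>i\<in>UNIV. \<bar>p$i - z$i\<bar>)"
        by (rule sum_subtractf)
      also have "(\<Sum>i\<in>UNIV. real N * f$i * (p$i - z$i)) = (\<Sum>i\<in>UNIV. real N * (f$i * p$i - f$i * z$i))"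
        by (rule sum.cong) (simp_all add: algebra_simps)
      also have "\<dots> = real N * (inner f p - inner f z)"
        unfolding inner_vec_def inner_real_def sum_subtractf[symmetric] sum_distrib_left by simp
      finally have "ev l p - ev l z \<ge> real N * (inner f p - inner f z) - (\<Sum>i\<in>UNIV. \<bar>p$i - z$i\<bar>)" .
      moreover have "real N * (inner f p - inner f z) \<ge> real N * \<delta>"
        using fS[OF pS] unfolding \<delta>_def by (intro mult_left_mono) auto
      ultimately have "ev l p - ev l z > 0" using Kp N by linarith
      with zp show False by simp
    qed
  qed
  show ?thesis using HV VH unfolding V_def S_def by blast
qed

end
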